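(* Let $n\ge 1$ and let $p$ be a probability distribution on $\{0,1\}^n$ with $p(x)>0$ for all $x$. For nonempty subsets $I,J\subseteq\{1,\dots,n\}$, the Fisher information between the coordinates $\eta_I$ and $\eta_J$ at $p$ is $$g^{IJ}(\eta)=\sum_{K\subseteq I\cap J}(-1)^{|I-K|+|J-K|}\cdot\frac{1}{p_K},$$ where $|\cdot|$ denotes cardinality.
   Context: For $K\subseteq\{1,\dots,n\}$ (including $K=\emptyset$), $p_K$ denotes $p(x)$ at the point $x$ with $x_i=1$ for $i\in K$ and $x_i=0$ for $i\notin K$. For $I\neq\emptyset$, $X_I(x)=\prod_{i\in I}x_i$ and the $\eta$-coordinates are $\eta_I=E_p[X_I]$; $(\eta_I)_{I\neq\emptyset}$ is a coordinate system on the manifold of strictly positive distributions on $\{0,1\}^n$. For a coordinate system $\xi$, the Fisher information is $g_{ij}=E_p\big[\frac{\partial\log p(x;\xi)}{\partial\xi_i}\frac{\partial\log p(x;\xi)}{\partial\xi_j}\big]$. *)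

theory Defs
  imports "HOL-Analysis.Analysis"
begin

text \<open>A point x of {0,1}^n is identified with the set K = {i. x_i = 1} \<subseteq> {1..n};
  a distribution is a function p :: nat set \<Rightarrow> real, p K = p_K.\<close>

definition pos_dist :: "nat \<Rightarrow> (nat set \<Rightarrow> real) \<Rightarrow> bool" where
  "pos_dist n p \<longleftrightarrow> (\<forall>K. K \<subseteq> {1..n} \<longrightarrow> p K > 0) \<and> (\<Sum>K\<in>Pow {1..n}. p K) = 1"

text \<open>X_I(x) = prod_{i in I} x_i\<close>
definition X :: "nat set \<Rightarrow> nat set \<Rightarrow> real" where
  "X I K = (if I \<subseteq> K then 1 else 0)"

definition eta :: "nat \<Rightarrow> (nat set \<Rightarrow> real) \<Rightarrow> nat set \<Rightarrow> real" where
  "eta n p I = (\<Sum>K\<in>Pow {1..n}. p K * X I K)"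

definition dist_of_eta :: "nat \<Rightarrow> (nat set \<Rightarrow> real) \<Rightarrow> nat set \<Rightarrow> real" where
  "dist_of_eta n e = (THE q. pos_dist n q \<and> (\<forall>K. \<not> K \<subseteq> {1..n} \<longrightarrow> q K = 0) \<and>
      (\<forall>I. I \<subseteq> {1..n} \<longrightarrow> I \<noteq> {} \<longrightarrow> eta n q I = e I))"

definition dlog_eta :: "nat \<Rightarrow> (nat set \<Rightarrow> real) \<Rightarrow> nat set \<Rightarrow> nat set \<Rightarrow> real" where
  "dlog_eta n p I K = deriv (\<lambda>t. ln (dist_of_eta n ((eta n p)(I := t)) K)) (eta n p I)"

definition fisher_eta :: "nat \<Rightarrow> (nat set \<Rightarrow> real) \<Rightarrow> nat set \<Rightarrow> nat set \<Rightarrow> real" where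
  "fisher_eta n p I J = (\<Sum>K\<in>Pow {1..n}. p K * dlog_eta n p I K * dlog_eta n p J K)"

end

theory Submission imports Defs begin

lemma alt:
  assumes "finite S" "U \<subseteq> S"
  shows "(\<Sum>T | T \<subseteq> S \<and> U \<subseteq> T. (-1::real)^card(T-U)) = (if U=S then 1 else 0)"
proof -
  have fin: "finite {T. T \<subseteq> S \<and> U \<subseteq> T}" using assms by (auto intro: finite_subset[of _ "Pow S"])
  have e: "(-1::real)^card(T-U) = (-1)^card U * (-1)^card T" if "T \<subseteq> S" "U \<subseteq> T" for T
  proof -
    have "finite T" using that assms finite_subset by blast
    hence "card T = card (T-U) + card U" using that
      by (metis card_Diff_subset card_mono finite_subset le_add_diff_inverse2)
    thus ?thesis by (simp add: power_add mult_ac)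
  qed
  have "(\<Sum>T | T \<subseteq> S \<and> U \<subseteq> T. (-1::real)^card(T-U)) = (-1)^card U * (\<Sum>T | T \<subseteq> S \<and> U \<subseteq> T. (-1::real)^card T)"
    by (simp add: sum_distrib_left e)
  also have "\<dots> = (if U=S then 1 else 0)"
  proof (cases "U = S")
    case True
    then have "{T. T \<subseteq> S \<and> U \<subseteq> T} = {S}" by auto
    then show ?thesis using True by (simp flip: power_add)
  next
    case False
    then have "U \<subset> S" using assms by auto
    then show ?thesis using False fin
      by (simp add: sum_alternating_cancels card_subsupersets_even_odd assms(1))
  qed
  finally show ?thesis .
qed

definition mo :: "nat set \<Rightarrow> nat set \<Rightarrow> real" where
  "mo K I = (if K \<subseteq> I then (-1::real)^card(I-K) else 0)"

lemma inner_A: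
  assumes "finite V" "K \<subseteq> V" "L \<subseteq> V"
  shows "(\<Sum>I\<in>Pow V. mo K I * X I L) = (if K = L then 1 else 0)"
proof (cases "K \<subseteq> L")
  case True
  have "(\<Sum>I\<in>Pow V. mo K I * X I L) = (\<Sum>I | I \<subseteq> L \<and> K \<subseteq> I. (-1::real)^card(I-K))"
    using assms by (intro sum.mono_neutral_cong_right) (auto simp: mo_def X_def intro: finite_subset[of _ "Pow V"])
  also have "\<dots> = (if K = L then 1 else 0)"
    using alt[of L K] True assms finite_subset by blast
  finally show ?thesis .
next
  case False
  have "\<forall>I\<in>Pow V. mo K I * X I L = 0" using False by (auto simp: mo_def X_def)
  then show ?thesis using False by (simp add: sum.neutral)
qed

lemma inv_A:
  assumes "finite V" "K \<subseteq> V"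
  shows "(\<Sum>I\<in>Pow V. mo K I * (\<Sum>L\<in>Pow V. q L * X I L)) = q K"
proof -
  have "(\<Sum>I\<in>Pow V. mo K I * (\<Sum>L\<in>Pow V. q L * X I L)) = (\<Sum>L\<in>Pow V. q L * (\<Sum>I\<in>Pow V. mo K I * X I L))"
    unfolding sum_distrib_left
    by (subst sum.swap) (intro sum.cong refl, simp add: mult.left_commute)
  also have "\<dots> = (\<Sum>L\<in>Pow V. q L * (if K = L then 1 else 0))"
    using assms by (intro sum.cong) (auto simp: inner_A)
  also have "\<dots> = q K" using assms by (simp add: sum.delta' if_distrib cong: if_cong)
  finally show ?thesis .
qed

lemma inner_B:
  assumes "finite V" "I \<subseteq> V" "J \<subseteq> V"
  shows "(\<Sum>K\<in>Pow V. X I K * mo K J) = (if I = J then 1 else 0)"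
proof (cases "I \<subseteq> J")
  case True
  have fJ: "finite J" using assms finite_subset by blast
  have e: "mo K J = (-1)^card(J-I) * (-1::real)^card(K-I)" if "I \<subseteq> K" "K \<subseteq> J" for K
  proof -
    have "J - I = (J - K) \<union> (K - I)" "(J-K) \<inter> (K-I) = {}" using that by auto
    hence "card (J-I) = card (J-K) + card(K-I)" using fJ that
      by (metis card_Un_disjoint finite_Diff finite_subset)
    hence "(-1::real)^card(J-I) * (-1)^card(K-I) = (-1)^card(J-K) * ((-1)^card(K-I))^2"
      by (simp add: power_add power2_eq_square mult_ac)
    moreover have "((-1::real)^card(K-I))^2 = 1" by (metis mult.commute power_mult power_minus1_even)
    ultimately show ?thesis using that by (simp add: mo_def)
  qed
  have "(\<Sum>K\<in>Pow V. X I K * mo K J) = (\<Sum>K | K \<subseteq> J \<and> I \<subseteq> K. mo K J)"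
    using assms by (intro sum.mono_neutral_cong_right) (auto simp: mo_def X_def intro: finite_subset[of _ "Pow V"])
  also have "\<dots> = (\<Sum>K | K \<subseteq> J \<and> I \<subseteq> K. (-1)^card(J-I) * (-1::real)^card(K-I))"
    by (intro sum.cong) (auto simp: e)
  also have "\<dots> = (-1)^card(J-I) * (if I = J then 1 else 0)"
    using alt[of J I] True fJ by (simp add: sum_distrib_left[symmetric])
  also have "\<dots> = (if I = J then 1 else 0)" by simp
  finally show ?thesis .
next
  case False
  have "\<forall>K\<in>Pow V. X I K * mo K J = 0" using False by (auto simp: mo_def X_def)
  then show ?thesis using False by (simp add: sum.neutral)
qed

lemma inv_B:
  assumes "finite V" "I \<subseteq> V"
  shows "(\<Sum>K\<in>Pow V. (\<Sum>J\<in>Pow V. mo K J * f J) * X I K) = f I"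
proof -
  have "(\<Sum>K\<in>Pow V. (\<Sum>J\<in>Pow V. mo K J * f J) * X I K) = (\<Sum>J\<in>Pow V. f J * (\<Sum>K\<in>Pow V. X I K * mo K J))"
    unfolding sum_distrib_left sum_distrib_right
    by (subst sum.swap) (intro sum.cong refl, simp add: mult_ac)
  also have "\<dots> = (\<Sum>J\<in>Pow V. f J * (if I = J then 1 else 0))"
    using assms by (intro sum.cong) (auto simp: inner_B)
  also have "\<dots> = f I" using assms by (simp add: if_distrib cong: if_cong)
  finally show ?thesis .
qed


lemma mo_abs: "\<bar>mo K I\<bar> \<le> 1"
  by (simp add: mo_def power_abs)

theorem proposition2:
  fixes n :: nat and p :: "nat set \<Rightarrow> real" and I J :: "nat set"
  assumes "n \<ge> 1" and "pos_dist n p"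
    and "I \<subseteq> {1..n}" "I \<noteq> {}" and "J \<subseteq> {1..n}" "J \<noteq> {}"
  shows "fisher_eta n p I J =
    (\<Sum>K\<in>Pow (I \<inter> J). (-1) ^ (card (I - K) + card (J - K)) * (1 / p K))"
proof -
  define V where "V = {1..n}"
  have fV: "finite V" by (simp add: V_def)
  have ppos: "\<And>K. K \<subseteq> V \<Longrightarrow> p K > 0" and psum: "(\<Sum>K\<in>Pow V. p K) = 1"
    using assms(2) by (auto simp: pos_dist_def V_def)
  have eta0: "\<And>q. eta n q {} = (\<Sum>K\<in>Pow V. q K)" by (simp add: eta_def X_def V_def)
  define c where "c = Min (p ` Pow V)"
  have cpos: "c > 0" unfolding c_def using fV ppos by (subst Min_gr_iff) auto
  have cle: "\<And>K. K \<subseteq> V \<Longrightarrow> c \<le> p K" unfolding c_def using fV by (intro Min_le) auto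
  have dl: "dlog_eta n p L K = mo K L / p K" if L: "L \<subseteq> V" "L \<noteq> {}" and K: "K \<subseteq> V" for L K
  proof -
    define a where "a = eta n p L"
    define ep where "ep t J = (if J = {} then 1 else ((eta n p)(L := t)) J)" for t J
    define r where "r t K = (if K \<subseteq> V then \<Sum>J\<in>Pow V. mo K J * ep t J else 0)" for t K
    have ep_a: "ep t J = eta n p J + (if J = L then t - a else 0)" for t J
      using L psum by (auto simp: ep_def a_def eta0)
    have r_eq: "r t K = p K + mo K L * (t - a)" if "K \<subseteq> V" for t K
    proof -
      have "r t K = (\<Sum>J\<in>Pow V. mo K J * (\<Sum>M\<in>Pow V. p M * X J M)) + (\<Sum>J\<in>Pow V. mo K J * (if J = L then t - a else 0))"
        using that by (simp add: r_def ep_a distrib_left sum.distrib eta_def V_def)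
      also have "\<dots> = p K + mo K L * (t - a)"
        using inv_A[OF fV that, of p] L fV by (simp add: if_distrib cong: if_cong)
      finally show ?thesis .
    qed
    have rpos: "r t K > 0" if "\<bar>t - a\<bar> < c" "K \<subseteq> V" for t K
    proof -
      have "\<bar>mo K L * (t - a)\<bar> \<le> \<bar>t - a\<bar>" using mo_abs[of K L]
        by (simp add: abs_mult mult_left_le_one_le)
      thus ?thesis using that cle[OF that(2)] r_eq[OF that(2), of t] by (simp add: abs_le_iff)
    qed
    have dist_eq: "dist_of_eta n ((eta n p)(L := t)) = r t" if "\<bar>t - a\<bar> < c" for t
      unfolding dist_of_eta_def
    proof (rule the_equality)
      have etar: "eta n (r t) J = ep t J" if "J \<subseteq> V" for J
      proof -
        have "eta n (r t) J = (\<Sum>K\<in>Pow V. (\<Sum>J\<in>Pow V. mo K J * ep t J) * X J K)"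
          unfolding eta_def V_def[symmetric] by (intro sum.cong) (auto simp: r_def)
        also have "\<dots> = ep t J" by (rule inv_B[OF fV that])
        finally show ?thesis .
      qed
      have s1: "(\<Sum>K\<in>Pow V. r t K) = 1" using etar[of "{}"] by (simp add: eta0 ep_def)
      have A: "pos_dist n (r t)" unfolding pos_dist_def V_def[symmetric] using rpos[OF that] s1 by auto
      have B: "\<forall>K. \<not> K \<subseteq> {1..n} \<longrightarrow> r t K = 0" by (simp add: r_def V_def)
      have C: "\<forall>I. I \<subseteq> {1..n} \<longrightarrow> I \<noteq> {} \<longrightarrow> eta n (r t) I = ((eta n p)(L := t)) I"
        using etar unfolding V_def by (simp add: ep_def)
      show "pos_dist n (r t) \<and> (\<forall>K. \<not> K \<subseteq> {1..n} \<longrightarrow> r t K = 0) \<and>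
        (\<forall>I. I \<subseteq> {1..n} \<longrightarrow> I \<noteq> {} \<longrightarrow> eta n (r t) I = ((eta n p)(L := t)) I)"
        using A B C by blast
    next
      fix q assume q: "pos_dist n q \<and> (\<forall>K. \<not> K \<subseteq> {1..n} \<longrightarrow> q K = 0) \<and>
        (\<forall>I. I \<subseteq> {1..n} \<longrightarrow> I \<noteq> {} \<longrightarrow> eta n q I = ((eta n p)(L := t)) I)"
      have eq: "eta n q J = ep t J" if "J \<subseteq> V" for J
        using q that by (auto simp: ep_def eta0 pos_dist_def V_def)
      show "q = r t"
      proof
        fix K show "q K = r t K"
        proof (cases "K \<subseteq> V")
          case True
          have "q K = (\<Sum>J\<in>Pow V. mo K J * (\<Sum>M\<in>Pow V. q M * X J M))" using inv_A[OF fV True, of q] by simp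
          also have "\<dots> = (\<Sum>J\<in>Pow V. mo K J * ep t J)"
            using eq by (intro sum.cong) (auto simp: eta_def V_def)
          finally show ?thesis using True by (simp add: r_def)
        next
          case False then show ?thesis using q by (simp add: r_def V_def)
        qed
      qed
    qed
    have ev: "eventually (\<lambda>t. ln (dist_of_eta n ((eta n p)(L := t)) K) = ln (p K + mo K L * (t - a))) (nhds a)"
    proof -
      have "eventually (\<lambda>t. t \<in> ball a c) (nhds a)"
        using cpos by (intro eventually_nhds_in_open) auto
      then show ?thesis
      proof (rule eventually_mono)
        fix t assume "t \<in> ball a c"
        hence "\<bar>t - a\<bar> < c" by (simp add: dist_real_def abs_minus_commute)
        thus "ln (dist_of_eta n ((eta n p)(L := t)) K) = ln (p K + mo K L * (t - a))"
          using dist_eq r_eq K by simp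
      qed
    qed
    have "((\<lambda>t. ln (p K + mo K L * (t - a))) has_real_derivative mo K L / p K) (at a)"
      using ppos[OF K] by (auto intro!: derivative_eq_intros)
    hence "((\<lambda>t. ln (dist_of_eta n ((eta n p)(L := t)) K)) has_real_derivative mo K L / p K) (at a)"
      using DERIV_cong_ev[OF refl ev refl] by simp
    thus ?thesis unfolding dlog_eta_def a_def[symmetric] by (rule DERIV_imp_deriv)
  qed
  have "fisher_eta n p I J = (\<Sum>K\<in>Pow V. mo K I * mo K J / p K)"
    unfolding fisher_eta_def V_def[symmetric]
    using assms ppos by (intro sum.cong) (auto simp: dl V_def power2_eq_square)
  also have "\<dots> = (\<Sum>K\<in>Pow (I \<inter> J). (-1) ^ (card (I - K) + card (J - K)) * (1 / p K))"
    using assms fV by (intro sum.mono_neutral_cong_right) (auto simp: mo_def V_def power_add)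
  finally show ?thesis .
qed

end
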